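(* Let $f=f(u)$ be smooth with $f'(u)\le0$ for all $u\in\mathbb{R}$, let $u^*$ be the unique root of $f(u)=u$, let $(\rho_0,u_0)\in C^1_b(\mathbb{R})\times C^2_b(\mathbb{R})$ with $\rho_0\ge0$ and $e_0=u_0'+\rho_0\ge0$ on $\mathbb{R}$, and set $M=\max\{\sup\rho_0,\sup e_0\}$. Let $(\rho,u)$ be a classical solution of $(S_f)$ on $[0,T)$, sufficiently smooth that $\rho_x$ and $e_x$ are $C^1$. Then for all $t\in[0,T)$, $$\|\rho_x(t,\cdot)\|_\infty\le\big(1+\|\rho_0'\|_\infty+\|e_0'\|_\infty\big)\,e^{12(\|f\|_{C^2}+1)\max\{M^3,1\}\,t},$$ where $\|f\|_{C^2}=\sup_{v\in I}(|f(v)|+|f'(v)|+|f''(v)|)$ with $I=[\min\{\inf u_0,u^*\},\max\{\sup u_0,u^*\}]$.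
   Context: When $f$ depends on $u$ only, system $(S_f)$ is: $\rho_t+(\rho f(u))_x=0$, $u_t+uu_x=\rho\,(f(u)-u)$ for $x\in\mathbb{R}$, $t>0$, with $\rho(0,x)=\rho_0(x)\ge0$, $u(0,x)=u_0(x)$. A classical solution on $[0,T)$ is a pair $\rho,u\in C^1([0,T)\times\mathbb{R})$ satisfying the equations pointwise and the initial data, such that $\rho,u,\rho_x,u_x$ are bounded on $[0,t]\times\mathbb{R}$ for every $t<T$. We write $e:=u_x+\rho$ and $e_0:=u_0'+\rho_0$. $C^k_b(\mathbb{R})$ denotes bounded $C^k$ functions with bounded derivatives up to order $k$; $\|g\|_\infty=\sup_x|g(x)|$. *)

theory Defs
  imports "HOL-Analysis.Analysis"
begin

definition smooth_real :: "(real \<Rightarrow> real) \<Rightarrow> bool" where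
  "smooth_real f \<longleftrightarrow> (\<forall>n x. ((deriv ^^ n) f) differentiable (at x))"

text \<open>C1 on [0,T) x R, described by its partial derivatives gt (in t, one-sided at t = 0)
  and gx (in x), all continuous on [0,T) x R.\<close>
definition C1_strip :: "real \<Rightarrow> (real \<Rightarrow> real \<Rightarrow> real) \<Rightarrow> (real \<Rightarrow> real \<Rightarrow> real)
    \<Rightarrow> (real \<Rightarrow> real \<Rightarrow> real) \<Rightarrow> bool" where
  "C1_strip T g gt gx \<longleftrightarrow>
     (\<forall>t\<in>{0..<T}. \<forall>x. ((\<lambda>s. g s x) has_real_derivative gt t x) (at t within {0..<T})
                     \<and> ((\<lambda>y. g t y) has_real_derivative gx t x) (at x)) \<and>
     continuous_on ({0..<T} \<times> UNIV) (\<lambda>p. g (fst p) (snd p)) \<and>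
     continuous_on ({0..<T} \<times> UNIV) (\<lambda>p. gt (fst p) (snd p)) \<and>
     continuous_on ({0..<T} \<times> UNIV) (\<lambda>p. gx (fst p) (snd p))"

definition bdd_strip :: "real \<Rightarrow> (real \<Rightarrow> real \<Rightarrow> real) \<Rightarrow> bool" where
  "bdd_strip T g \<longleftrightarrow> (\<forall>t\<in>{0..<T}. bounded ((\<lambda>p. g (fst p) (snd p)) ` ({0..t} \<times> UNIV)))"

definition supnorm :: "(real \<Rightarrow> real) \<Rightarrow> real" where
  "supnorm g = Sup (range (\<lambda>x. \<bar>g x\<bar>))"

end

theory Submission imports Defs begin

lemma mvt_seg:
  fixes g g' :: "real \<Rightarrow> real"
  assumes der: "\<And>z. z \<in> closed_segment p q \<Longrightarrow> (g has_real_derivative g' z) (at z within S)"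
    and sub: "closed_segment p q \<subseteq> S"
  shows "\<exists>z\<in>closed_segment p q. g q - g p = g' z * (q - p)"
proof (cases p q rule: linorder_cases)
  case less
  have "\<exists>x\<in>{p<..<q}. g q - g p = (\<lambda>h. g' x * h) (q - p)"
  proof (rule mvt_simple[OF less])
    fix x assume "p \<le> x" "x \<le> q"
    then have "x \<in> closed_segment p q" using less closed_segment_eq_real_ivl by auto
    then have "(g has_real_derivative g' x) (at x within {p..q})"
      using der sub less closed_segment_eq_real_ivl by (auto intro: has_field_derivative_subset)
    then show "(g has_derivative (\<lambda>h. g' x * h)) (at x within {p..q})"
      by (simp add: has_field_derivative_def)
  qed
  then show ?thesis using less closed_segment_eq_real_ivl by force
next
  case equal then show ?thesis by auto
next
  case greater
  have "\<exists>x\<in>{q<..<p}. g p - g q = (\<lambda>h. g' x * h) (p - q)"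
  proof (rule mvt_simple[OF greater])
    fix x assume "q \<le> x" "x \<le> p"
    then have "x \<in> closed_segment p q" using greater closed_segment_eq_real_ivl by auto
    then have "(g has_real_derivative g' x) (at x within {q..p})"
      using der sub greater closed_segment_eq_real_ivl by (auto intro: has_field_derivative_subset)
    then show "(g has_derivative (\<lambda>h. g' x * h)) (at x within {q..p})"
      by (simp add: has_field_derivative_def)
  qed
  then obtain x where "x \<in> {q<..<p}" "g p - g q = g' x * (p - q)" by auto
  then show ?thesis using greater closed_segment_eq_real_ivl
    by (intro bexI[of _ x]) (auto simp: algebra_simps)
qed

lemma dist_pair_lt:
  fixes a a0 b b0 :: real
  assumes "\<bar>a - a0\<bar> < d/2" "\<bar>b - b0\<bar> < d/2"
  shows "dist (a,b) (a0,b0) < d"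
proof -
  have "(dist a a0)\<^sup>2 + (dist b b0)\<^sup>2 \<le> (dist a a0 + dist b b0)\<^sup>2"
    by (simp add: power2_sum)
  then have "sqrt ((dist a a0)\<^sup>2 + (dist b b0)\<^sup>2) \<le> sqrt ((dist a a0 + dist b b0)\<^sup>2)"
    by (rule real_sqrt_le_mono)
  also have "\<dots> = dist a a0 + dist b b0" by simp
  finally have "dist (a,b) (a0,b0) \<le> dist a a0 + dist b b0"
    by (simp add: dist_Pair_Pair)
  then show ?thesis using assms by (simp add: dist_real_def)
qed

lemma seg_sub_convex: "convex (A::real set) \<Longrightarrow> p \<in> A \<Longrightarrow> q \<in> A \<Longrightarrow> closed_segment p q \<subseteq> A"
  by (simp add: closed_segment_subset)

lemma seg_dist: "(z::real) \<in> closed_segment p q \<Longrightarrow> \<bar>z - p\<bar> \<le> \<bar>q - p\<bar>"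
  using dist_in_closed_segment[of z p q] by (simp add: dist_real_def abs_minus_commute)

lemma schwarz:
  fixes g ga gb h :: "real \<Rightarrow> real \<Rightarrow> real"
  assumes cA: "convex A" and cB: "convex B"
    and a0: "a0 \<in> A" and b0: "b0 \<in> B" and nt: "at a0 within A \<noteq> bot"
    and ga: "\<And>a b. a \<in> A \<Longrightarrow> b \<in> B \<Longrightarrow> ((\<lambda>a. g a b) has_real_derivative ga a b) (at a within A)"
    and gb: "\<And>a b. a \<in> A \<Longrightarrow> b \<in> B \<Longrightarrow> ((\<lambda>b. g a b) has_real_derivative gb a b) (at b within B)"
    and h: "\<And>a b. a \<in> A \<Longrightarrow> b \<in> B \<Longrightarrow> ((\<lambda>a. gb a b) has_real_derivative h a b) (at a within A)"
    and hc: "continuous_on (A \<times> B) (\<lambda>p. h (fst p) (snd p))"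
  shows "((\<lambda>b. ga a0 b) has_real_derivative h a0 b0) (at b0 within B)"
  unfolding has_field_derivative_def has_derivative_within_alt
proof (intro conjI allI impI)
  show "bounded_linear ((*) (h a0 b0))" by (rule bounded_linear_mult_right)
  fix e :: real assume e: "e > 0"
  from hc a0 b0 e obtain d where d: "d > 0"
    and dh: "\<And>p. p \<in> A \<times> B \<Longrightarrow> dist p (a0,b0) < d \<Longrightarrow> dist (h (fst p) (snd p)) (h a0 b0) < e"
    unfolding continuous_on_iff by (metis SigmaI fst_conv snd_conv)
  show "\<exists>d>0. \<forall>y\<in>B. norm (y - b0) < d \<longrightarrow>
      norm (ga a0 y - ga a0 b0 - h a0 b0 * (y - b0)) \<le> e * norm (y - b0)"
  proof (intro exI[of _ "d/2"] conjI ballI impI)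
    show "d/2 > 0" using d by simp
    fix y assume y: "y \<in> B" and yd: "norm (y - b0) < d/2"
    define c where "c = y - b0"
    define Q where "Q = (\<lambda>a. (g a y - g a b0 - (g a0 y - g a0 b0)) / (a - a0))"
    have l1: "((\<lambda>a. (g a y - g a0 y) / (a - a0)) \<longlongrightarrow> ga a0 y) (at a0 within A)"
      using ga[OF a0 y] by (simp add: has_field_derivative_iff)
    have l2: "((\<lambda>a. (g a b0 - g a0 b0) / (a - a0)) \<longlongrightarrow> ga a0 b0) (at a0 within A)"
      using ga[OF a0 b0] by (simp add: has_field_derivative_iff)
    have "((\<lambda>a. (g a y - g a0 y) / (a - a0) - (g a b0 - g a0 b0) / (a - a0))
        \<longlongrightarrow> ga a0 y - ga a0 b0) (at a0 within A)"
      by (rule tendsto_diff[OF l1 l2])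
    moreover have "(\<lambda>a. (g a y - g a0 y) / (a - a0) - (g a b0 - g a0 b0) / (a - a0)) = Q"
      unfolding Q_def by (rule ext) (simp add: diff_divide_distrib)
    ultimately have lQ: "(Q \<longlongrightarrow> ga a0 y - ga a0 b0) (at a0 within A)" by simp
    then have lQ2: "((\<lambda>a. \<bar>Q a - h a0 b0 * c\<bar>) \<longlongrightarrow> \<bar>ga a0 y - ga a0 b0 - h a0 b0 * c\<bar>) (at a0 within A)"
      by (intro tendsto_intros)
    have ev: "eventually (\<lambda>a. \<bar>Q a - h a0 b0 * c\<bar> \<le> e * \<bar>c\<bar>) (at a0 within A)"
    proof -
      have "eventually (\<lambda>a. a \<in> A \<and> a \<noteq> a0 \<and> dist a a0 < d/2) (at a0 within A)"
        using d by (auto simp: eventually_at intro!: exI[of _ "d/2"])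
      then show ?thesis
      proof (rule eventually_mono)
        fix a assume a: "a \<in> A \<and> a \<noteq> a0 \<and> dist a a0 < d/2"
        show "\<bar>Q a - h a0 b0 * c\<bar> \<le> e * \<bar>c\<bar>"
        proof (cases "c = 0")
          case True then show ?thesis by (simp add: Q_def c_def)
        next
          case False
          have sB: "closed_segment b0 y \<subseteq> B" using seg_sub_convex[OF cB b0 y] .
          obtain xi where xi: "xi \<in> closed_segment b0 y"
            and m1: "(g a y - g a0 y) - (g a b0 - g a0 b0) = (gb a xi - gb a0 xi) * (y - b0)"
          proof -
            have "\<exists>z\<in>closed_segment b0 y. (\<lambda>z. g a z - g a0 z) y - (\<lambda>z. g a z - g a0 z) b0
                 = (gb a z - gb a0 z) * (y - b0)"
              by (rule mvt_seg[OF _ sB]) (use a a0 sB in \<open>auto intro!: derivative_intros gb\<close>)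
            then show ?thesis using that by auto
          qed
          have xiB: "xi \<in> B" using xi sB by auto
          have sA: "closed_segment a0 a \<subseteq> A" using seg_sub_convex[OF cA a0] a by auto
          obtain tau where tau: "tau \<in> closed_segment a0 a"
            and m2: "gb a xi - gb a0 xi = h tau xi * (a - a0)"
            using mvt_seg[of a0 a "\<lambda>w. gb w xi" "\<lambda>w. h w xi" A, OF _ sA] h xiB sA by blast
          have tauA: "tau \<in> A" using tau sA by auto
          have num: "g a y - g a b0 - (g a0 y - g a0 b0) = h tau xi * c * (a - a0)"
            using m1 m2 by (simp add: c_def algebra_simps)
          have Qa: "Q a = h tau xi * c"
            using a unfolding Q_def num by simp
          have "\<bar>tau - a0\<bar> < d/2" using seg_dist[OF tau] a by (simp add: dist_real_def)
          moreover have "\<bar>xi - b0\<bar> < d/2" using seg_dist[OF xi] yd by simp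
          ultimately have "dist (tau, xi) (a0, b0) < d" by (rule dist_pair_lt)
          then have "\<bar>h tau xi - h a0 b0\<bar> < e" using dh[of "(tau,xi)"] tauA xiB
            by (simp add: dist_real_def)
          then have "\<bar>h tau xi - h a0 b0\<bar> * \<bar>c\<bar> \<le> e * \<bar>c\<bar>"
            by (simp add: mult_right_mono)
          then show ?thesis by (simp add: Qa abs_mult[symmetric] left_diff_distrib)
        qed
      qed
    qed
    have "\<bar>ga a0 y - ga a0 b0 - h a0 b0 * c\<bar> \<le> e * \<bar>c\<bar>"
      by (rule tendsto_upperbound[OF lQ2 ev nt])
    then show "norm (ga a0 y - ga a0 b0 - h a0 b0 * (y - b0)) \<le> e * norm (y - b0)"
      by (simp add: c_def)
  qed
qed

lemma C1_dt: "C1_strip T g gt gx \<Longrightarrow> t \<in> {0..<T} \<Longrightarrow> ((\<lambda>s. g s x) has_real_derivative gt t x) (at t within {0..<T})"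
  unfolding C1_strip_def by blast
lemma C1_dx: "C1_strip T g gt gx \<Longrightarrow> t \<in> {0..<T} \<Longrightarrow> ((\<lambda>y. g t y) has_real_derivative gx t x) (at x)"
  unfolding C1_strip_def by blast
lemma C1_c: "C1_strip T g gt gx \<Longrightarrow> continuous_on ({0..<T} \<times> UNIV) (\<lambda>p. g (fst p) (snd p))"
  unfolding C1_strip_def by blast
lemma C1_ct: "C1_strip T g gt gx \<Longrightarrow> continuous_on ({0..<T} \<times> UNIV) (\<lambda>p. gt (fst p) (snd p))"
  unfolding C1_strip_def by blast
lemma C1_cx: "C1_strip T g gt gx \<Longrightarrow> continuous_on ({0..<T} \<times> UNIV) (\<lambda>p. gx (fst p) (snd p))"
  unfolding C1_strip_def by blast

lemma line_deriv:
  assumes C: "C1_strip T g gt gx" and s0: "0 < s0" "s0 < T"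
  shows "((\<lambda>s. g s (y0 + a*(s - s0))) has_real_derivative (gt s0 y0 + a * gx s0 y0)) (at s0)"
  unfolding has_field_derivative_def has_derivative_at_alt
proof (intro conjI allI impI)
  show "bounded_linear ((*) (gt s0 y0 + a * gx s0 y0))" by (rule bounded_linear_mult_right)
  fix e :: real assume e: "e > 0"
  define Y where "Y = (\<lambda>s. y0 + a*(s - s0))"
  have s0T: "s0 \<in> {0..<T}" using s0 by simp
  have "((\<lambda>s. g s0 (Y s)) has_real_derivative gx s0 (Y s0) * a) (at s0)"
    unfolding Y_def
    by (rule DERIV_chain2[OF C1_dx[OF C s0T]]) (auto intro!: derivative_eq_intros)
  then have "((\<lambda>s. g s0 (Y s)) has_derivative (*) (gx s0 y0 * a)) (at s0)"
    by (simp add: has_field_derivative_def Y_def)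
  then obtain d1 where d1: "d1 > 0" and hd1: "\<And>s. norm (s - s0) < d1 \<Longrightarrow>
      norm (g s0 (Y s) - g s0 (Y s0) - gx s0 y0 * a * (s - s0)) \<le> e/2 * norm (s - s0)"
    unfolding has_derivative_at_alt using e by (meson half_gt_zero)
  from C1_ct[OF C] s0T e obtain d2 where d2: "d2 > 0"
    and hd2: "\<And>p. p \<in> {0..<T} \<times> UNIV \<Longrightarrow> dist p (s0,y0) < d2 \<Longrightarrow> dist (gt (fst p) (snd p)) (gt s0 y0) < e/2"
    unfolding continuous_on_iff by (metis SigmaI UNIV_I fst_conv snd_conv half_gt_zero)
  define d where "d = min d1 (min (d2/2 / (\<bar>a\<bar>+1)) (min s0 (T - s0)))"
  have dpos: "d > 0" using d1 d2 s0 by (simp add: d_def)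
  show "\<exists>d>0. \<forall>s. norm (s - s0) < d \<longrightarrow>
      norm (g s (Y s) - g s0 (Y s0) - (gt s0 y0 + a * gx s0 y0) * (s - s0)) \<le> e * norm (s - s0)"
    unfolding Y_def[symmetric]
  proof (intro exI[of _ d] conjI allI impI dpos)
    fix s assume sd: "norm (s - s0) < d"
    have sT: "closed_segment s0 s \<subseteq> {0..<T}"
      using sd s0 by (auto simp: d_def closed_segment_eq_real_ivl split: if_splits)
    obtain xi where xi: "xi \<in> closed_segment s0 s"
      and m: "g s (Y s) - g s0 (Y s) = gt xi (Y s) * (s - s0)"
      using mvt_seg[of s0 s "\<lambda>w. g w (Y s)" "\<lambda>w. gt w (Y s)" "{0..<T}", OF _ sT]
        C1_dt[OF C] sT by blast
    have "\<bar>xi - s0\<bar> < d2/2"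
    proof -
      have "d \<le> d2/2/(\<bar>a\<bar>+1)" by (simp add: d_def)
      also have "\<dots> \<le> d2/2" using d2 by (simp add: divide_le_eq)
      finally show ?thesis using seg_dist[OF xi] sd by simp
    qed
    moreover have "\<bar>Y s - y0\<bar> < d2/2"
    proof -
      have "\<bar>Y s - y0\<bar> = \<bar>a\<bar> * \<bar>s - s0\<bar>" by (simp add: Y_def abs_mult)
      also have "\<dots> \<le> (\<bar>a\<bar>+1) * \<bar>s - s0\<bar>" by (simp add: mult_right_mono)
      also have "\<dots> < (\<bar>a\<bar>+1) * (d2/2/(\<bar>a\<bar>+1))"
        using sd by (intro mult_strict_left_mono) (auto simp: d_def)
      also have "\<dots> = d2/2" by (simp add: field_simps add_pos_nonneg)
      finally show ?thesis .
    qed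
    ultimately have "dist (xi, Y s) (s0, y0) < d2" by (rule dist_pair_lt)
    moreover have "(xi, Y s) \<in> {0..<T} \<times> UNIV" using xi sT by auto
    ultimately have gte: "\<bar>gt xi (Y s) - gt s0 y0\<bar> < e/2" using hd2 by (force simp: dist_real_def)
    have p1: "\<bar>g s (Y s) - g s0 (Y s) - gt s0 y0 * (s - s0)\<bar> \<le> e/2 * \<bar>s - s0\<bar>"
    proof -
      have "\<bar>gt xi (Y s) - gt s0 y0\<bar> * \<bar>s - s0\<bar> \<le> e/2 * \<bar>s - s0\<bar>"
        using gte by (intro mult_right_mono) auto
      then show ?thesis unfolding m by (simp add: left_diff_distrib[symmetric] abs_mult)
    qed
    have p2: "\<bar>g s0 (Y s) - g s0 (Y s0) - gx s0 y0 * a * (s - s0)\<bar> \<le> e/2 * \<bar>s - s0\<bar>"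
      using hd1[of s] sd by (simp add: d_def)
    have "\<bar>g s (Y s) - g s0 (Y s0) - (gt s0 y0 + a * gx s0 y0) * (s - s0)\<bar>
       = \<bar>(g s (Y s) - g s0 (Y s) - gt s0 y0 * (s - s0)) + (g s0 (Y s) - g s0 (Y s0) - gx s0 y0 * a * (s - s0))\<bar>"
      by (simp add: algebra_simps)
    also have "\<dots> \<le> e * \<bar>s - s0\<bar>" using p1 p2 by linarith
    finally show "norm (g s (Y s) - g s0 (Y s0) - (gt s0 y0 + a * gx s0 y0) * (s - s0)) \<le> e * norm (s - s0)"
      by simp
  qed
qed

lemma touch_contra:
  assumes C: "C1_strip T W Wt Wx" and ts: "0 < ts" "ts < T" and z: "W ts ys = 0"
    and neg: "Wt ts ys + a * Wx ts ys < 0"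
    and bk: "\<And>h. 0 < h \<Longrightarrow> h \<le> ts \<Longrightarrow> W (ts - h) (ys - a*h) < 0"
  shows False
proof -
  have "((\<lambda>s. W s (ys + a*(s - ts))) has_real_derivative (Wt ts ys + a * Wx ts ys)) (at ts)"
    by (rule line_deriv[OF C ts])
  from DERIV_neg_dec_left[OF this neg] obtain d where d: "d > 0"
    and hd: "\<And>h. h > 0 \<Longrightarrow> h < d \<Longrightarrow> W ts (ys + a*(ts - ts)) < W (ts - h) (ys + a*(ts - h - ts))"
    by blast
  define h where "h = min (d/2) ts"
  have h: "h > 0" "h < d" "h \<le> ts" using d ts by (auto simp: h_def)
  have "W ts ys < W (ts - h) (ys - a*h)" using hd[OF h(1,2)] by simp
  with bk[OF h(1,3)] z show False by simp
qed

lemma touch2: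
  assumes C1: "C1_strip T W1 W1t W1x" and C2: "C1_strip T W2 W2t W2x"
    and t1: "0 \<le> t1" "t1 < T" and V: "0 \<le> V"
    and init: "\<And>y. \<bar>y - x0\<bar> \<le> V*t1 \<Longrightarrow> W1 0 y < 0 \<and> W2 0 y < 0"
    and tc1: "\<And>s y. 0 < s \<Longrightarrow> s \<le> t1 \<Longrightarrow> \<bar>y - x0\<bar> \<le> V*(t1-s) \<Longrightarrow> W1 s y = 0 \<Longrightarrow> W2 s y \<le> 0
       \<Longrightarrow> \<exists>a. \<bar>a\<bar> \<le> V \<and> W1t s y + a*W1x s y < 0"
    and tc2: "\<And>s y. 0 < s \<Longrightarrow> s \<le> t1 \<Longrightarrow> \<bar>y - x0\<bar> \<le> V*(t1-s) \<Longrightarrow> W2 s y = 0 \<Longrightarrow> W1 s y \<le> 0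
       \<Longrightarrow> \<exists>a. \<bar>a\<bar> \<le> V \<and> W2t s y + a*W2x s y < 0"
  shows "W1 t1 x0 < 0 \<and> W2 t1 x0 < 0"
proof (rule ccontr)
  assume nc: "\<not> (W1 t1 x0 < 0 \<and> W2 t1 x0 < 0)"
  define D where "D = {p::real\<times>real. 0 \<le> fst p \<and> fst p \<le> t1 \<and> \<bar>snd p - x0\<bar> \<le> V*(t1 - fst p)}"
  define Wm where "Wm = (\<lambda>p. max (W1 (fst p) (snd p)) (W2 (fst p) (snd p)))"
  have DT: "D \<subseteq> {0..<T} \<times> UNIV" using t1 by (auto simp: D_def)
  have cW: "continuous_on D Wm" unfolding Wm_def
    by (intro continuous_on_max continuous_on_subset[OF C1_c[OF C1] DT] continuous_on_subset[OF C1_c[OF C2] DT])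
  have clD: "closed D" unfolding D_def
    by (intro closed_Collect_conj closed_Collect_le continuous_intros)
  have bD: "bounded D"
  proof (rule bounded_subset[OF bounded_Times[OF bounded_closed_interval bounded_closed_interval]])
    show "D \<subseteq> {0..t1} \<times> {x0 - V*t1..x0 + V*t1}"
    proof
      fix p assume "p \<in> D"
      then have "0 \<le> fst p" "fst p \<le> t1" "\<bar>snd p - x0\<bar> \<le> V*(t1 - fst p)" by (auto simp: D_def)
      moreover have "V*(t1 - fst p) \<le> V*t1" using V \<open>0 \<le> fst p\<close> by (simp add: mult_left_mono)
      ultimately show "p \<in> {0..t1} \<times> {x0 - V*t1..x0 + V*t1}" by (cases p) auto
    qed
  qed
  define S where "S = D \<inter> Wm -` {0..}"
  have clS: "closed S" unfolding S_def
    by (rule continuous_closed_preimage[OF cW clD closed_atLeast])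
  have cS: "compact S" using clS bD by (metis S_def bounded_subset compact_eq_bounded_closed inf_le1)
  have "(t1, x0) \<in> S" using nc t1 by (auto simp: S_def D_def Wm_def)
  then have "fst ` S \<noteq> {}" by blast
  from compact_attains_inf[OF compact_continuous_image[OF continuous_on_fst[OF continuous_on_id] cS] this]
  obtain ts ys where tsS: "(ts, ys) \<in> S" and tsmin: "\<And>p. p \<in> S \<Longrightarrow> ts \<le> fst p"
    by force
  have tsD: "(ts,ys) \<in> D" and Wts: "Wm (ts,ys) \<ge> 0" using tsS by (auto simp: S_def)
  have before: "Wm (s,y) < 0" if "(s,y) \<in> D" "s < ts" for s y
  proof (rule ccontr)
    assume "\<not> Wm (s, y) < 0"
    then have "(s,y) \<in> S" using that by (auto simp: S_def)
    then show False using tsmin[of "(s,y)"] that by simp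
  qed
  have ts0: "ts > 0"
  proof (rule ccontr)
    assume "\<not> ts > 0"
    then have "ts = 0" using tsD by (auto simp: D_def)
    then have "\<bar>ys - x0\<bar> \<le> V*t1" using tsD by (auto simp: D_def)
    from init[OF this] Wts \<open>ts = 0\<close> show False by (simp add: Wm_def max_def split: if_splits)
  qed
  have atts: "Wm (ts,y) \<le> 0" if "(ts,y) \<in> D" for y
  proof (rule ccontr)
    assume "\<not> Wm (ts, y) \<le> 0"
    then have pos: "Wm (ts,y) > 0" by simp
    from cW that pos obtain dd where dd: "dd > 0"
      and hdd: "\<And>q. q \<in> D \<Longrightarrow> dist q (ts,y) < dd \<Longrightarrow> dist (Wm q) (Wm (ts,y)) < Wm (ts,y)"
      unfolding continuous_on_iff by metis
    define s where "s = ts - min (dd/2) ts"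
    have s: "0 \<le> s" "s < ts" "ts - s < dd" using dd ts0 by (auto simp: s_def)
    have "(s,y) \<in> D"
    proof -
      have "V*(t1 - ts) \<le> V*(t1 - s)" using V s by (intro mult_left_mono) auto
      then show ?thesis using that s by (auto simp: D_def)
    qed
    moreover have "dist (s,y) (ts,y) < dd" using s by (simp add: dist_Pair_Pair dist_real_def)
    ultimately have "dist (Wm (s,y)) (Wm (ts,y)) < Wm (ts,y)" by (rule hdd)
    then have "Wm (s,y) > 0" by (simp add: dist_real_def)
    with before[OF \<open>(s,y) \<in> D\<close> s(2)] show False by simp
  qed
  have W0: "Wm (ts,ys) = 0" using atts[OF tsD] Wts by simp
  have tsr: "0 < ts" "ts \<le> t1" "\<bar>ys - x0\<bar> \<le> V*(t1-ts)" "ts < T" using ts0 tsD t1 by (auto simp: D_def)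
  have backD: "(ts - h, ys - a*h) \<in> D" if "0 < h" "h \<le> ts" "\<bar>a\<bar> \<le> V" for h a
  proof -
    have "\<bar>ys - a*h - x0\<bar> \<le> \<bar>ys - x0\<bar> + \<bar>a\<bar>*h" using that abs_triangle_ineq4[of "ys - x0" "a*h"] by (simp add: abs_mult algebra_simps)
    also have "\<dots> \<le> V*(t1-ts) + V*h" using tsr that by (intro add_mono mult_right_mono) auto
    finally show ?thesis using that tsr by (simp add: D_def algebra_simps)
  qed
  show False
  proof (cases "W1 ts ys \<ge> W2 ts ys")
    case True
    then have z: "W1 ts ys = 0" "W2 ts ys \<le> 0" using W0 by (auto simp: Wm_def max_def split: if_splits)
    obtain a where a: "\<bar>a\<bar> \<le> V" "W1t ts ys + a*W1x ts ys < 0" using tc1[OF tsr(1-3) z] by blast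
    show False
    proof (rule touch_contra[OF C1 tsr(1) tsr(4) z(1) a(2)])
      fix h :: real assume "0 < h" "h \<le> ts"
      then have "Wm (ts - h, ys - a*h) < 0" using backD[OF _ _ a(1)] before by simp
      then show "W1 (ts - h) (ys - a*h) < 0" by (simp add: Wm_def)
    qed
  next
    case False
    then have z: "W2 ts ys = 0" "W1 ts ys \<le> 0" using W0 by (auto simp: Wm_def max_def split: if_splits)
    obtain a where a: "\<bar>a\<bar> \<le> V" "W2t ts ys + a*W2x ts ys < 0" using tc2[OF tsr(1-3) z] by blast
    show False
    proof (rule touch_contra[OF C2 tsr(1) tsr(4) z(1) a(2)])
      fix h :: real assume "0 < h" "h \<le> ts"
      then have "Wm (ts - h, ys - a*h) < 0" using backD[OF _ _ a(1)] before by simp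
      then show "W2 (ts - h) (ys - a*h) < 0" by (simp add: Wm_def)
    qed
  qed
qed

lemma C1_add:
  assumes "C1_strip T g gt gx" "C1_strip T h ht hx"
  shows "C1_strip T (\<lambda>t x. g t x + h t x) (\<lambda>t x. gt t x + ht t x) (\<lambda>t x. gx t x + hx t x)"
  using assms unfolding C1_strip_def
  by (auto intro!: derivative_intros continuous_intros)

lemma C1_diff:
  assumes "C1_strip T g gt gx" "C1_strip T h ht hx"
  shows "C1_strip T (\<lambda>t x. g t x - h t x) (\<lambda>t x. gt t x - ht t x) (\<lambda>t x. gx t x - hx t x)"
  using assms unfolding C1_strip_def
  by (auto intro!: derivative_intros continuous_intros)

lemma C1_mult:
  assumes "C1_strip T g gt gx" "C1_strip T h ht hx"
  shows "C1_strip T (\<lambda>t x. g t x * h t x) (\<lambda>t x. gt t x * h t x + g t x * ht t x) (\<lambda>t x. gx t x * h t x + g t x * hx t x)"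
  using assms unfolding C1_strip_def
  by (auto intro!: derivative_eq_intros continuous_intros)

lemma C1_time:
  assumes "\<And>t. (\<phi> has_real_derivative \<phi>' t) (at t)" "continuous_on UNIV \<phi>'"
  shows "C1_strip T (\<lambda>t x. \<phi> t) (\<lambda>t x. \<phi>' t) (\<lambda>t x. 0)"
proof -
  have c: "continuous_on UNIV \<phi>" using assms(1)
    by (meson DERIV_isCont continuous_at_imp_continuous_on)
  show ?thesis unfolding C1_strip_def
    by (auto intro!: continuous_intros has_field_derivative_at_within assms(1)
        continuous_on_compose2[OF c] continuous_on_compose2[OF assms(2)])
qed

lemma C1_cong:
  assumes "C1_strip T g gt gx"
    and "\<And>t x. t \<in> {0..<T} \<Longrightarrow> gt' t x = gt t x" "\<And>t x. t \<in> {0..<T} \<Longrightarrow> gx' t x = gx t x"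
  shows "C1_strip T g gt' gx'"
proof -
  have e1: "continuous_on ({0..<T} \<times> UNIV) (\<lambda>p. gt' (fst p) (snd p)) = continuous_on ({0..<T} \<times> UNIV) (\<lambda>p. gt (fst p) (snd p))"
    by (rule continuous_on_cong) (auto simp: assms(2))
  have e2: "continuous_on ({0..<T} \<times> UNIV) (\<lambda>p. gx' (fst p) (snd p)) = continuous_on ({0..<T} \<times> UNIV) (\<lambda>p. gx (fst p) (snd p))"
    by (rule continuous_on_cong) (auto simp: assms(3))
  show ?thesis using assms(1) unfolding C1_strip_def e1 e2 by (simp add: assms(2,3))
qed

lemma cvx: "convex {a..<(b::real)}"
  by (simp add: convex_real_interval)

lemma nt_Ico: "(0::real) \<le> t \<Longrightarrow> t < T \<Longrightarrow> at t within {0..<T} \<noteq> bot"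
  using islimpt_subset[OF islimpt_greaterThanLessThan1[of t T]] trivial_limit_within
  by (metis atLeastLessThan_iff greaterThanLessThan_iff less_imp_le order_trans subsetI)

lemma mm: "\<bar>x\<bar> \<le> X \<Longrightarrow> \<bar>y\<bar> \<le> Y \<Longrightarrow> \<bar>x*y\<bar> \<le> X*(Y::real)"
  unfolding abs_mult by (rule mult_mono) auto

lemma M_le_max: "0 \<le> M \<Longrightarrow> (M::real) \<le> max (M^3) 1"
proof (cases "M \<le> 1")
  case False
  then have "M * 1 \<le> M * (M * M)" by (intro mult_left_mono) (auto simp: less_1_mult[of M M, THEN less_imp_le])
  then show ?thesis by (simp add: power3_eq_cube)
qed auto

lemma key_common:
  fixes F M \<Phi> E R p :: real
  assumes F: "F \<ge> 0" and M: "M \<ge> 0" and Phi: "\<Phi> \<ge> 1" and E: "E = 12*(F+1)*max (M^3) 1"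
    and p: "\<bar>p\<bar> = \<Phi>" and R: "\<bar>R\<bar> \<le> 4*(F*M)*\<Phi> + F*M^3 \<or> \<bar>R\<bar> \<le> 4*M*\<Phi>"
  shows "2*p*R - 2*E*(\<Phi>*\<Phi>) < 0"
proof -
  define G where "G = (F+1)*max (M^3) 1"
  have mx: "max (M^3) 1 \<ge> 1" by simp
  have "1*1 \<le> (F+1)*max (M^3) 1" by (rule mult_mono) (use F in auto)
  then have G1: "G \<ge> 1" by (simp add: G_def)
  have FM: "F*M \<le> G" unfolding G_def by (rule mult_mono) (use F M M_le_max in auto)
  have FM3: "F*M^3 \<le> G" unfolding G_def by (rule mult_mono) (use F M in auto)
  have "1 * max (M^3) 1 \<le> (F+1) * max (M^3) 1" by (rule mult_right_mono) (use F in auto)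
  then have MG: "M \<le> G" using M_le_max[OF M] unfolding G_def by linarith
  have R5: "\<bar>R\<bar> \<le> 5*G*\<Phi>"
  proof -
    have a: "4*(F*M)*\<Phi> \<le> 4*G*\<Phi>" using FM Phi by (intro mult_right_mono) auto
    have "G*1 \<le> G*\<Phi>" using G1 Phi by (intro mult_left_mono) auto
    then have b: "F*M^3 \<le> G*\<Phi>" using FM3 by simp
    have c: "4*M*\<Phi> \<le> 4*G*\<Phi>" using MG Phi by (intro mult_right_mono) auto
    have "G*\<Phi> \<ge> 0" using G1 Phi by simp
    then show ?thesis using R a b c by linarith
  qed
  have "p*R \<le> \<bar>p*R\<bar>" by (rule abs_ge_self)
  then have "2*p*R \<le> 2*\<bar>p\<bar>*\<bar>R\<bar>" by (simp add: abs_mult)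
  also have "\<dots> = 2*\<Phi>*\<bar>R\<bar>" using p by simp
  also have "\<dots> \<le> 2*\<Phi>*(5*G*\<Phi>)" using R5 Phi by (intro mult_left_mono) auto
  also have "\<dots> < 2*E*(\<Phi>*\<Phi>)"
  proof -
    have "0 < G*(\<Phi>*\<Phi>)" using G1 Phi by simp
    have "E = 12*G" by (simp add: E G_def)
    then show ?thesis using \<open>0 < G*(\<Phi>*\<Phi>)\<close> by (simp add: algebra_simps)
  qed
  finally show ?thesis by simp
qed

lemma sq_abs_le: "q*q \<le> \<Phi>*\<Phi> \<Longrightarrow> \<Phi> \<ge> 0 \<Longrightarrow> \<bar>q\<bar> \<le> (\<Phi>::real)"
  using abs_le_square_iff[of q \<Phi>] by (simp add: power2_eq_square)

lemma sq_abs_eq: "p*p = \<Phi>*\<Phi> \<Longrightarrow> \<Phi> \<ge> 0 \<Longrightarrow> \<bar>p\<bar> = (\<Phi>::real)"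
  using abs_le_square_iff[of p \<Phi>] abs_le_square_iff[of \<Phi> p] by (simp add: power2_eq_square)

lemma sq_lt: "\<bar>q\<bar> < (\<Phi>::real) \<Longrightarrow> q*q < \<Phi>*\<Phi>"
  using abs_le_square_iff[of \<Phi> q] by (auto simp: power2_eq_square)

lemma sq_lt_abs: "q*q < \<Phi>*\<Phi> \<Longrightarrow> \<Phi> \<ge> 0 \<Longrightarrow> \<bar>q\<bar> < (\<Phi>::real)"
  using abs_le_square_iff[of \<Phi> q] by (auto simp: power2_eq_square)

lemma bounded_range_add: "bounded (range (g::real\<Rightarrow>real)) \<Longrightarrow> bounded (range h) \<Longrightarrow> bounded (range (\<lambda>x. g x + h x))"
proof -
  assume "bounded (range g)" "bounded (range h)"
  then obtain A B where A: "\<forall>z\<in>range g. norm z \<le> A" and B: "\<forall>z\<in>range h. norm z \<le> B"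
    unfolding bounded_iff by blast
  show ?thesis unfolding bounded_iff
  proof (intro exI ballI)
    fix z assume "z \<in> range (\<lambda>x. g x + h x)"
    then obtain x where z: "z = g x + h x" by auto
    have "\<bar>g x\<bar> \<le> A" "\<bar>h x\<bar> \<le> B" using A B by auto
    then show "norm z \<le> A + B" unfolding z by simp
  qed
qed

lemma supnorm_ge: "bounded (range g) \<Longrightarrow> \<bar>g y\<bar> \<le> supnorm g"
proof -
  assume b: "bounded (range g)"
  then obtain A where A: "\<forall>z\<in>range g. norm z \<le> A" unfolding bounded_iff by blast
  have "bdd_above (range (\<lambda>x. \<bar>g x\<bar>))" using A by (intro bdd_aboveI2[where M=A]) auto
  then show ?thesis unfolding supnorm_def by (rule cSup_upper[rotated]) auto
qed

locale pde =
  fixes f :: "real \<Rightarrow> real" and ustar :: real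
    and rho0 rho0' u0 u0' u0'' :: "real \<Rightarrow> real"
    and T :: real
    and rho rhot rhox u ut ux uxx rhoxt rhoxx ext exx :: "real \<Rightarrow> real \<Rightarrow> real"
  assumes f_smooth: "smooth_real f"
    and f_dec: "\<And>v. deriv f v \<le> 0"
    and ustar: "f ustar = ustar"
    and rho0_der: "\<And>x. (rho0 has_real_derivative rho0' x) (at x)"
    and rho0'_cont: "continuous_on UNIV rho0'"
    and rho0_bdd: "bounded (range rho0)" and rho0'_bdd: "bounded (range rho0')"
    and u0_der: "\<And>x. (u0 has_real_derivative u0' x) (at x)"
    and u0'_der: "\<And>x. (u0' has_real_derivative u0'' x) (at x)"
    and u0''_cont: "continuous_on UNIV u0''"
    and u0_bdd: "bounded (range u0)" and u0'_bdd: "bounded (range u0')"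
    and u0''_bdd: "bounded (range u0'')"
    and rho0_nonneg: "\<And>x. rho0 x \<ge> 0"
    and e0_nonneg: "\<And>x. u0' x + rho0 x \<ge> 0"
    and rho_C1: "C1_strip T rho rhot rhox"
    and u_C1: "C1_strip T u ut ux"
    and bdd1: "bdd_strip T rho" and bdd2: "bdd_strip T u" and bdd3: "bdd_strip T rhox" and bdd4: "bdd_strip T ux"
    and eq_rho: "\<And>t x. t \<in> {0..<T} \<Longrightarrow>
        ((\<lambda>y. rho t y * f (u t y)) has_real_derivative (- rhot t x)) (at x)"
    and eq_u: "\<And>t x. t \<in> {0..<T} \<Longrightarrow>
        ut t x + u t x * ux t x = rho t x * (f (u t x) - u t x)"
    and init1: "\<And>x. rho 0 x = rho0 x" and init2: "\<And>x. u 0 x = u0 x"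
    and ux_der: "\<And>t x. t \<in> {0..<T} \<Longrightarrow> ((\<lambda>y. ux t y) has_real_derivative uxx t x) (at x)"
    and rhox_C1: "C1_strip T rhox rhoxt rhoxx"
    and ex_C1: "C1_strip T (\<lambda>t x. uxx t x + rhox t x) ext exx"
begin

definition "f1 = deriv f"
definition "f2 = deriv (deriv f)"

lemma fd: "(f has_real_derivative f1 v) (at v)"
proof -
  have "((deriv ^^ 0) f) differentiable (at v)" using f_smooth unfolding smooth_real_def by blast
  then show ?thesis unfolding f1_def by (simp add: DERIV_deriv_iff_real_differentiable)
qed

lemma f1d: "(f1 has_real_derivative f2 v) (at v)"
proof -
  have "((deriv ^^ 1) f) differentiable (at v)" using f_smooth unfolding smooth_real_def by blast
  then show ?thesis unfolding f1_def f2_def by (simp add: DERIV_deriv_iff_real_differentiable)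
qed

lemma f2d: "f2 differentiable (at v)"
proof -
  have "((deriv ^^ 2) f) differentiable (at v)" using f_smooth unfolding smooth_real_def by blast
  then show ?thesis unfolding f2_def by (simp add: numeral_2_eq_2)
qed

lemma fd'[derivative_intros]: "(g has_real_derivative g') (at x within S) \<Longrightarrow> ((\<lambda>x. f (g x)) has_real_derivative f1 (g x) * g') (at x within S)"
  using DERIV_chain2[OF fd] by blast
lemma f1d'[derivative_intros]: "(g has_real_derivative g') (at x within S) \<Longrightarrow> ((\<lambda>x. f1 (g x)) has_real_derivative f2 (g x) * g') (at x within S)"
  using DERIV_chain2[OF f1d] by blast

lemma fc: "continuous_on UNIV f"
  using fd by (meson DERIV_isCont continuous_at_imp_continuous_on)
lemma f1c: "continuous_on UNIV f1"
  using f1d by (meson DERIV_isCont continuous_at_imp_continuous_on)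
lemma f2c: "continuous_on UNIV f2"
  using f2d by (meson differentiable_imp_continuous_within continuous_at_imp_continuous_on)

lemma fc'[continuous_intros]: "continuous_on S g \<Longrightarrow> continuous_on S (\<lambda>x. f (g x))"
  using continuous_on_compose2[OF fc] by blast
lemma f1c'[continuous_intros]: "continuous_on S g \<Longrightarrow> continuous_on S (\<lambda>x. f1 (g x))"
  using continuous_on_compose2[OF f1c] by blast
lemma f2c'[continuous_intros]: "continuous_on S g \<Longrightarrow> continuous_on S (\<lambda>x. f2 (g x))"
  using continuous_on_compose2[OF f2c] by blast

lemma f_anti: "x \<le> y \<Longrightarrow> f y \<le> f x"
  by (rule DERIV_nonpos_imp_nonincreasing) (use fd f_dec f1_def in auto)

abbreviation "S \<equiv> {0..<T} \<times> (UNIV::real set)"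

lemma cS: "continuous_on S (\<lambda>p. rho (fst p) (snd p))" "continuous_on S (\<lambda>p. rhot (fst p) (snd p))"
    "continuous_on S (\<lambda>p. rhox (fst p) (snd p))" "continuous_on S (\<lambda>p. u (fst p) (snd p))"
    "continuous_on S (\<lambda>p. ut (fst p) (snd p))" "continuous_on S (\<lambda>p. ux (fst p) (snd p))"
    "continuous_on S (\<lambda>p. rhoxt (fst p) (snd p))" "continuous_on S (\<lambda>p. rhoxx (fst p) (snd p))"
    "continuous_on S (\<lambda>p. ext (fst p) (snd p))" "continuous_on S (\<lambda>p. exx (fst p) (snd p))"
    "continuous_on S (\<lambda>p. uxx (fst p) (snd p) + rhox (fst p) (snd p))"
  using rho_C1 u_C1 rhox_C1 ex_C1 by (auto dest: C1_c C1_ct C1_cx)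

lemma cuxx: "continuous_on S (\<lambda>p. uxx (fst p) (snd p))"
proof -
  have "continuous_on S (\<lambda>p. (uxx (fst p) (snd p) + rhox (fst p) (snd p)) - rhox (fst p) (snd p))"
    by (rule continuous_on_diff[OF cS(11) cS(3)])
  then show ?thesis by simp
qed

lemma rhot_eq: "t \<in> {0..<T} \<Longrightarrow> rhot t x = -(rhox t x * f (u t x) + rho t x * f1 (u t x) * ux t x)"
proof -
  assume t: "t \<in> {0..<T}"
  have "((\<lambda>y. rho t y * f (u t y)) has_real_derivative (rhox t x * f (u t x) + rho t x * (f1 (u t x) * ux t x))) (at x)"
    using C1_dx[OF rho_C1 t] C1_dx[OF u_C1 t] by (auto intro!: derivative_eq_intros)
  from DERIV_unique[OF eq_rho[OF t] this] show ?thesis by (simp add: algebra_simps)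
qed

lemma ut_eq: "t \<in> {0..<T} \<Longrightarrow> ut t x = - u t x * ux t x + rho t x * (f (u t x) - u t x)"
  using eq_u[of t x] by simp

definition "uxt t x = - ux t x * ux t x - u t x * uxx t x + rhox t x * (f (u t x) - u t x) + rho t x * (f1 (u t x) - 1) * ux t x"

lemma cuxt: "continuous_on S (\<lambda>p. uxt (fst p) (snd p))"
  unfolding uxt_def using cS cuxx by (intro continuous_intros) auto

lemma ut_dx: "t \<in> {0..<T} \<Longrightarrow> ((\<lambda>y. ut t y) has_real_derivative uxt t x) (at x)"
proof -
  assume t: "t \<in> {0..<T}"
  have "((\<lambda>y. - u t y * ux t y + rho t y * (f (u t y) - u t y)) has_real_derivative uxt t x) (at x)"
    using C1_dx[OF rho_C1 t] C1_dx[OF u_C1 t] ux_der[OF t] unfolding uxt_def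
    by (auto intro!: derivative_eq_intros simp: power2_eq_square algebra_simps)
  moreover have "(\<lambda>y. ut t y) = (\<lambda>y. - u t y * ux t y + rho t y * (f (u t y) - u t y))"
    using ut_eq[OF t] by auto
  ultimately show ?thesis by simp
qed

lemma ux_dt: "t \<in> {0..<T} \<Longrightarrow> ((\<lambda>s. ux s x) has_real_derivative uxt t x) (at t within {0..<T})"
proof -
  assume t: "t \<in> {0..<T}"
  have hc: "continuous_on (UNIV \<times> {0..<T}) (\<lambda>p. uxt (snd p) (fst p))"
    by (rule continuous_on_compose2[OF cuxt, of _ prod.swap, simplified]) (auto intro: continuous_intros)
  show ?thesis
    by (rule schwarz[where g="\<lambda>a b. u b a" and ga="\<lambda>a b. ux b a" and gb="\<lambda>a b. ut b a"
          and h="\<lambda>a b. uxt b a" and A=UNIV and B="{0..<T}", OF convex_UNIV cvx])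
       (use t C1_dx[OF u_C1] C1_dt[OF u_C1] ut_dx hc in auto)
qed

lemma ux_C1: "C1_strip T ux uxt uxx"
  unfolding C1_strip_def using ux_dt ux_der cS cuxt cuxx by auto

definition "e t x = ux t x + rho t x"
definition "et t x = uxt t x + rhot t x"
definition "ex t x = uxx t x + rhox t x"

lemma e_C1: "C1_strip T e et ex"
  unfolding e_def et_def ex_def by (rule C1_add[OF ux_C1 rho_C1])

lemma et_eq: "t \<in> {0..<T} \<Longrightarrow> et t x = - ux t x * e t x - u t x * ex t x"
  unfolding et_def e_def ex_def uxt_def using rhot_eq[of t x] by (simp add: algebra_simps)

lemma ex_C1': "C1_strip T ex ext exx"
  using ex_C1 unfolding ex_def[abs_def] by simp

lemma ext_eq: "t \<in> {0..<T} \<Longrightarrow> ext t x = -(uxx t x * e t x + ux t x * ex t x) - (ux t x * ex t x + u t x * exx t x)"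
proof -
  assume t: "t \<in> {0..<T}"
  have t0: "0 \<le> t" "t < T" using t by auto
  have d1: "((\<lambda>y. et t y) has_real_derivative ext t x) (at x)"
    using schwarz[where g=e and ga=et and gb=ex and h=ext and A="{0..<T}" and B=UNIV,
        OF cvx convex_UNIV t _ nt_Ico[OF t0]]
      C1_dt[OF e_C1] C1_dx[OF e_C1] C1_dt[OF ex_C1'] C1_ct[OF ex_C1'] by simp
  have "((\<lambda>y. - ux t y * e t y - u t y * ex t y) has_real_derivative
       -(uxx t x * e t x + ux t x * ex t x) - (ux t x * ex t x + u t x * exx t x)) (at x)"
    using C1_dx[OF ux_C1 t] C1_dx[OF e_C1 t] C1_dx[OF u_C1 t] C1_dx[OF ex_C1' t]
    by (auto intro!: derivative_eq_intros)
  moreover have "(\<lambda>y. et t y) = (\<lambda>y. - ux t y * e t y - u t y * ex t y)"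
    using et_eq[OF t] by auto
  ultimately show ?thesis using DERIV_unique d1 by metis
qed

lemma rhoxt_eq: "t \<in> {0..<T} \<Longrightarrow> rhoxt t x = -(rhoxx t x * f (u t x) + rhox t x * (f1 (u t x) * ux t x))
     - (rhox t x * f1 (u t x) * ux t x + rho t x * (f2 (u t x) * ux t x) * ux t x + rho t x * f1 (u t x) * uxx t x)"
proof -
  assume t: "t \<in> {0..<T}"
  have t0: "0 \<le> t" "t < T" using t by auto
  have d1: "((\<lambda>y. rhot t y) has_real_derivative rhoxt t x) (at x)"
    using schwarz[where g=rho and ga=rhot and gb=rhox and h=rhoxt and A="{0..<T}" and B=UNIV,
        OF cvx convex_UNIV t _ nt_Ico[OF t0]]
      C1_dt[OF rho_C1] C1_dx[OF rho_C1] C1_dt[OF rhox_C1] C1_ct[OF rhox_C1] by simp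
  have "((\<lambda>y. -(rhox t y * f (u t y) + rho t y * f1 (u t y) * ux t y)) has_real_derivative
       -(rhoxx t x * f (u t x) + rhox t x * (f1 (u t x) * ux t x))
     - (rhox t x * f1 (u t x) * ux t x + rho t x * (f2 (u t x) * ux t x) * ux t x + rho t x * f1 (u t x) * uxx t x)) (at x)"
    using C1_dx[OF rhox_C1 t] C1_dx[OF rho_C1 t] C1_dx[OF u_C1 t] ux_der[OF t]
    by (auto intro!: derivative_eq_intros) (simp add: algebra_simps)
  moreover have "(\<lambda>y. rhot t y) = (\<lambda>y. -(rhox t y * f (u t y) + rho t y * f1 (u t y) * ux t y))"
    using rhot_eq[OF t] by auto
  ultimately have d2: "((\<lambda>y. rhot t y) has_real_derivative -(rhoxx t x * f (u t x) + rhox t x * (f1 (u t x) * ux t x))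
     - (rhox t x * f1 (u t x) * ux t x + rho t x * (f2 (u t x) * ux t x) * ux t x + rho t x * f1 (u t x) * uxx t x)) (at x)"
    by simp
  show ?thesis by (rule DERIV_unique[OF d1 d2])
qed

lemma bnd: "bdd_strip T g \<Longrightarrow> t \<in> {0..<T} \<Longrightarrow> \<exists>B\<ge>0. \<forall>s y. 0 \<le> s \<longrightarrow> s \<le> t \<longrightarrow> \<bar>g s y\<bar> \<le> B"
proof -
  assume "bdd_strip T g" "t \<in> {0..<T}"
  then have "bounded ((\<lambda>p. g (fst p) (snd p)) ` ({0..t} \<times> UNIV))" unfolding bdd_strip_def by blast
  then obtain B where B0: "\<forall>z\<in>(\<lambda>p. g (fst p) (snd p)) ` ({0..t} \<times> UNIV). norm z \<le> B"
    unfolding bounded_iff by blast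
  have B: "\<bar>g s y\<bar> \<le> B" if "0 \<le> s" "s \<le> t" for s y
    using B0 that by force
  show ?thesis
    using B by (intro exI[of _ "max B 0"]) (auto intro: order_trans[OF _ max.cobounded1])
qed

lemma fun_bnd: "continuous_on UNIV (h::real\<Rightarrow>real) \<Longrightarrow> \<exists>C\<ge>0. \<forall>v. \<bar>v\<bar> \<le> B \<longrightarrow> \<bar>h v\<bar> \<le> C"
proof -
  assume c: "continuous_on UNIV h"
  have "compact (h ` {-B..B})"
    by (rule compact_continuous_image[OF continuous_on_subset[OF c] compact_Icc]) auto
  then obtain C where C0: "\<forall>z\<in>h ` {-B..B}. norm z \<le> C"
    using compact_imp_bounded bounded_iff by blast
  have C: "\<bar>h v\<bar> \<le> C" if "\<bar>v\<bar> \<le> B" for v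
    using C0 that by force
  show ?thesis
    using C by (intro exI[of _ "max C 0"]) (auto intro: order_trans[OF _ max.cobounded1])
qed

lemma le_eps:
  fixes a c :: real
  assumes c: "c > 0" and h: "\<And>\<epsilon>. \<epsilon> > 0 \<Longrightarrow> a < \<epsilon> * c"
  shows "a \<le> 0"
proof (rule ccontr)
  assume "\<not> a \<le> 0"
  then have "a/c > 0" using c by simp
  from h[OF this] c show False by simp
qed

lemma rho_nonneg: assumes t: "t \<in> {0..<T}" shows "rho t x \<ge> 0"
proof -
  obtain Bu where Bu: "Bu \<ge> 0" "\<And>s y. 0 \<le> s \<Longrightarrow> s \<le> t \<Longrightarrow> \<bar>u s y\<bar> \<le> Bu" using bnd[OF bdd2 t] by blast
  obtain Bux where Bux: "Bux \<ge> 0" "\<And>s y. 0 \<le> s \<Longrightarrow> s \<le> t \<Longrightarrow> \<bar>ux s y\<bar> \<le> Bux" using bnd[OF bdd4 t] by blast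
  obtain Bf where Bf: "Bf \<ge> 0" "\<And>v. \<bar>v\<bar> \<le> Bu \<Longrightarrow> \<bar>f v\<bar> \<le> Bf" using fun_bnd[OF fc] by blast
  obtain Bf1 where Bf1: "Bf1 \<ge> 0" "\<And>v. \<bar>v\<bar> \<le> Bu \<Longrightarrow> \<bar>f1 v\<bar> \<le> Bf1" using fun_bnd[OF f1c] by blast
  define K where "K = Bf1 * Bux + 1"
  define V where "V = Bf"
  have t0: "0 \<le> t" "t < T" using t by auto
  have main: "- rho t x < \<epsilon> * exp (K*t)" if e: "\<epsilon> > 0" for \<epsilon>
  proof -
    have C: "C1_strip T (\<lambda>s y. - \<epsilon> * exp (K * s) - rho s y) (\<lambda>s y. - \<epsilon> * (K * exp (K * s)) - rhot s y) (\<lambda>s y. 0 - rhox s y)"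
      by (rule C1_diff[OF C1_time rho_C1]) (auto intro!: derivative_eq_intros continuous_intros)
    have "(- \<epsilon> * exp (K*t) - rho t x < 0) \<and> (- \<epsilon> * exp (K*t) - rho t x < 0)"
    proof (rule touch2[OF C C t0 _])
      show "0 \<le> V" using Bf by (simp add: V_def)
      fix y show "- \<epsilon> * exp (K*0) - rho 0 y < 0 \<and> - \<epsilon> * exp (K*0) - rho 0 y < 0"
        using e rho0_nonneg[of y] init1[of y] by simp
    next
      fix s y assume s: "0 < s" "s \<le> t" and z: "- \<epsilon> * exp (K * s) - rho s y = 0"
      have sT: "s \<in> {0..<T}" using s t0 by auto
      show "\<exists>a. \<bar>a\<bar> \<le> V \<and> - \<epsilon> * (K * exp (K * s)) - rhot s y + a * (0 - rhox s y) < 0"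
      proof (intro exI[of _ "f (u s y)"] conjI)
        show "\<bar>f (u s y)\<bar> \<le> V" using Bf(2) Bu(2)[of s y] s by (simp add: V_def)
        have r: "rho s y = - \<epsilon> * exp (K * s)" using z by simp
        have "\<bar>f1 (u s y) * ux s y\<bar> \<le> Bf1 * Bux"
          unfolding abs_mult using Bf1 Bux Bu(2)[of s y] s by (intro mult_mono) auto
        then have pos: "K + f1 (u s y) * ux s y > 0" unfolding K_def by linarith
        have "- \<epsilon> * (K * exp (K * s)) - rhot s y + f (u s y) * (0 - rhox s y)
            = - \<epsilon> * exp (K * s) * (K + f1 (u s y) * ux s y)"
          using rhot_eq[OF sT, of y] r by (simp add: algebra_simps)
        also have "\<dots> < 0" using e pos by (simp add: mult_pos_pos)
        finally show "- \<epsilon> * (K * exp (K * s)) - rhot s y + f (u s y) * (0 - rhox s y) < 0" .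
      qed
    next
      fix s y assume s: "0 < s" "s \<le> t" and z: "- \<epsilon> * exp (K * s) - rho s y = 0"
      have sT: "s \<in> {0..<T}" using s t0 by auto
      show "\<exists>a. \<bar>a\<bar> \<le> V \<and> - \<epsilon> * (K * exp (K * s)) - rhot s y + a * (0 - rhox s y) < 0"
      proof (intro exI[of _ "f (u s y)"] conjI)
        show "\<bar>f (u s y)\<bar> \<le> V" using Bf(2) Bu(2)[of s y] s by (simp add: V_def)
        have r: "rho s y = - \<epsilon> * exp (K * s)" using z by simp
        have "\<bar>f1 (u s y) * ux s y\<bar> \<le> Bf1 * Bux"
          unfolding abs_mult using Bf1 Bux Bu(2)[of s y] s by (intro mult_mono) auto
        then have pos: "K + f1 (u s y) * ux s y > 0" unfolding K_def by linarith
        have "- \<epsilon> * (K * exp (K * s)) - rhot s y + f (u s y) * (0 - rhox s y)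
            = - \<epsilon> * exp (K * s) * (K + f1 (u s y) * ux s y)"
          using rhot_eq[OF sT, of y] r by (simp add: algebra_simps)
        also have "\<dots> < 0" using e pos by (simp add: mult_pos_pos)
        finally show "- \<epsilon> * (K * exp (K * s)) - rhot s y + f (u s y) * (0 - rhox s y) < 0" .
      qed
    qed
    then show ?thesis by simp
  qed
  have "- rho t x \<le> 0" by (rule le_eps[OF exp_gt_zero main])
  then show ?thesis by simp
qed

lemma T0: "t \<in> {0..<T} \<Longrightarrow> (0::real) \<in> {0..<T}" by auto

lemma ux0: "t \<in> {0..<T} \<Longrightarrow> ux 0 y = u0' y"
proof -
  assume t: "t \<in> {0..<T}"
  have "((\<lambda>z. u 0 z) has_real_derivative ux 0 y) (at y)" using C1_dx[OF u_C1 T0[OF t]] .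
  then have "(u0 has_real_derivative ux 0 y) (at y)" using init2 by simp
  then show ?thesis using DERIV_unique u0_der by blast
qed

lemma rhox0: "t \<in> {0..<T} \<Longrightarrow> rhox 0 y = rho0' y"
proof -
  assume t: "t \<in> {0..<T}"
  have "((\<lambda>z. rho 0 z) has_real_derivative rhox 0 y) (at y)" using C1_dx[OF rho_C1 T0[OF t]] .
  then have "(rho0 has_real_derivative rhox 0 y) (at y)" using init1 by simp
  then show ?thesis using DERIV_unique rho0_der by blast
qed

lemma uxx0: "t \<in> {0..<T} \<Longrightarrow> uxx 0 y = u0'' y"
proof -
  assume t: "t \<in> {0..<T}"
  have "((\<lambda>z. ux 0 z) has_real_derivative uxx 0 y) (at y)" using ux_der[OF T0[OF t]] .
  moreover have "(\<lambda>z. ux 0 z) = u0'" using ux0[OF t] by auto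
  ultimately have "(u0' has_real_derivative uxx 0 y) (at y)" by simp
  then show ?thesis using DERIV_unique u0'_der by blast
qed

lemma e_nonneg: assumes t: "t \<in> {0..<T}" shows "e t x \<ge> 0"
proof -
  obtain Bu where Bu: "Bu \<ge> 0" "\<And>s y. 0 \<le> s \<Longrightarrow> s \<le> t \<Longrightarrow> \<bar>u s y\<bar> \<le> Bu" using bnd[OF bdd2 t] by blast
  obtain Bux where Bux: "Bux \<ge> 0" "\<And>s y. 0 \<le> s \<Longrightarrow> s \<le> t \<Longrightarrow> \<bar>ux s y\<bar> \<le> Bux" using bnd[OF bdd4 t] by blast
  define K where "K = Bux + 1"
  have t0: "0 \<le> t" "t < T" using t by auto
  have main: "- e t x < \<epsilon> * exp (K*t)" if eps: "\<epsilon> > 0" for \<epsilon>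
  proof -
    have C: "C1_strip T (\<lambda>s y. - \<epsilon> * exp (K * s) - e s y) (\<lambda>s y. - \<epsilon> * (K * exp (K * s)) - et s y) (\<lambda>s y. 0 - ex s y)"
      by (rule C1_diff[OF C1_time e_C1]) (auto intro!: derivative_eq_intros continuous_intros)
    have tc: "\<exists>a. \<bar>a\<bar> \<le> Bu \<and> - \<epsilon> * (K * exp (K * s)) - et s y + a * (0 - ex s y) < 0"
      if s: "0 < s" "s \<le> t" and z: "- \<epsilon> * exp (K * s) - e s y = 0" for s y
    proof (intro exI[of _ "u s y"] conjI)
      have sT: "s \<in> {0..<T}" using s t0 by auto
      show "\<bar>u s y\<bar> \<le> Bu" using Bu(2)[of s y] s by simp
      have r: "e s y = - \<epsilon> * exp (K * s)" using z by simp
      have "\<bar>ux s y\<bar> \<le> Bux" using Bux(2)[of s y] s by simp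
      then have pos: "K + ux s y > 0" unfolding K_def by linarith
      have "- \<epsilon> * (K * exp (K * s)) - et s y + u s y * (0 - ex s y)
          = - \<epsilon> * exp (K * s) * (K + ux s y)"
        using et_eq[OF sT, of y] r by (simp add: algebra_simps)
      also have "\<dots> < 0" using eps pos by (simp add: mult_pos_pos)
      finally show "- \<epsilon> * (K * exp (K * s)) - et s y + u s y * (0 - ex s y) < 0" .
    qed
    have "(- \<epsilon> * exp (K*t) - e t x < 0) \<and> (- \<epsilon> * exp (K*t) - e t x < 0)"
    proof (rule touch2[OF C C t0 Bu(1)])
      fix y show "- \<epsilon> * exp (K*0) - e 0 y < 0 \<and> - \<epsilon> * exp (K*0) - e 0 y < 0"
        using eps e0_nonneg[of y] init1[of y] ux0[OF t, of y] by (simp add: e_def)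
    qed (use tc in auto)
    then show ?thesis by simp
  qed
  have "- e t x \<le> 0" by (rule le_eps[OF exp_gt_zero main])
  then show ?thesis by simp
qed

definition "umin = min (Inf (range u0)) ustar"
definition "umax = max (Sup (range u0)) ustar"

lemma u0_range: "umin \<le> u0 y" "u0 y \<le> umax"
proof -
  have "Inf (range u0) \<le> u0 y" by (rule cInf_lower) (auto intro: bounded_imp_bdd_below[OF u0_bdd])
  then show "umin \<le> u0 y" by (simp add: umin_def)
  have "u0 y \<le> Sup (range u0)" by (rule cSup_upper) (auto intro: bounded_imp_bdd_above[OF u0_bdd])
  then show "u0 y \<le> umax" by (simp add: umax_def)
qed

lemma u_range: assumes t: "t \<in> {0..<T}" shows "umin \<le> u t x \<and> u t x \<le> umax"
proof -
  obtain Bu where Bu: "Bu \<ge> 0" "\<And>s y. 0 \<le> s \<Longrightarrow> s \<le> t \<Longrightarrow> \<bar>u s y\<bar> \<le> Bu" using bnd[OF bdd2 t] by blast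
  have t0: "0 \<le> t" "t < T" using t by auto
  have main: "u t x - (umax + \<epsilon> * (1 + t)) < 0 \<and> (umin - \<epsilon> * (1 + t)) - u t x < 0" if eps: "\<epsilon> > 0" for \<epsilon>
  proof -
    have C1: "C1_strip T (\<lambda>s y. u s y - (umax + \<epsilon> * (1 + s))) (\<lambda>s y. ut s y - \<epsilon>) (\<lambda>s y. ux s y - 0)"
      by (rule C1_diff[OF u_C1 C1_time]) (auto intro!: derivative_eq_intros continuous_intros)
    have C2: "C1_strip T (\<lambda>s y. (umin - \<epsilon> * (1 + s)) - u s y) (\<lambda>s y. - \<epsilon> - ut s y) (\<lambda>s y. 0 - ux s y)"
      by (rule C1_diff[OF C1_time u_C1]) (auto intro!: derivative_eq_intros continuous_intros)
    show ?thesis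
    proof (rule touch2[OF C1 C2 t0 Bu(1)])
      fix y show "u 0 y - (umax + \<epsilon> * (1 + 0)) < 0 \<and> (umin - \<epsilon> * (1 + 0)) - u 0 y < 0"
        using eps u0_range[of y] init2[of y] by simp
    next
      fix s y assume s: "0 < s" "s \<le> t" and z: "u s y - (umax + \<epsilon> * (1 + s)) = 0"
      have sT: "s \<in> {0..<T}" using s t0 by auto
      show "\<exists>a. \<bar>a\<bar> \<le> Bu \<and> ut s y - \<epsilon> + a * (ux s y - 0) < 0"
      proof (intro exI[of _ "u s y"] conjI)
        show "\<bar>u s y\<bar> \<le> Bu" using Bu(2)[of s y] s by simp
        have "umax \<ge> ustar" by (simp add: umax_def)
        then have gt: "u s y > ustar" using z eps s by (smt (verit) mult_pos_pos)
        have "f (u s y) \<le> ustar" using f_anti[of ustar "u s y"] gt ustar by simp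
        then have "rho s y * (f (u s y) - u s y) \<le> 0"
          using rho_nonneg[OF sT, of y] gt by (intro mult_nonneg_nonpos) auto
        then show "ut s y - \<epsilon> + u s y * (ux s y - 0) < 0" using eq_u[OF sT, of y] eps by simp
      qed
    next
      fix s y assume s: "0 < s" "s \<le> t" and z: "(umin - \<epsilon> * (1 + s)) - u s y = 0"
      have sT: "s \<in> {0..<T}" using s t0 by auto
      show "\<exists>a. \<bar>a\<bar> \<le> Bu \<and> - \<epsilon> - ut s y + a * (0 - ux s y) < 0"
      proof (intro exI[of _ "u s y"] conjI)
        show "\<bar>u s y\<bar> \<le> Bu" using Bu(2)[of s y] s by simp
        have "umin \<le> ustar" by (simp add: umin_def)
        then have lt: "u s y < ustar" using z eps s by (smt (verit) mult_pos_pos)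
        have "f (u s y) \<ge> ustar" using f_anti[of "u s y" ustar] lt ustar by simp
        then have "rho s y * (f (u s y) - u s y) \<ge> 0"
          using rho_nonneg[OF sT, of y] lt by (intro mult_nonneg_nonneg) auto
        then show "- \<epsilon> - ut s y + u s y * (0 - ux s y) < 0" using eq_u[OF sT, of y] eps by simp
      qed
    qed
  qed
  have c: "1 + t > 0" using t0 by simp
  have "u t x - umax \<le> 0" by (rule le_eps[OF c]) (use main in force)
  moreover have "umin - u t x \<le> 0" by (rule le_eps[OF c]) (use main in force)
  ultimately show ?thesis by simp
qed

definition "MM = max (Sup (range rho0)) (Sup (range (\<lambda>x. u0' x + rho0 x)))"

lemma init_M: "rho0 y \<le> MM" "u0' y + rho0 y \<le> MM" "0 \<le> MM"
proof -
  have "rho0 y \<le> Sup (range rho0)" by (rule cSup_upper) (auto intro: bounded_imp_bdd_above[OF rho0_bdd])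
  then show "rho0 y \<le> MM" by (simp add: MM_def)
  then show "0 \<le> MM" using rho0_nonneg[of y] by simp
  obtain A where A: "\<forall>z\<in>range u0'. norm z \<le> A" using u0'_bdd unfolding bounded_iff by blast
  obtain B where B: "\<forall>z\<in>range rho0. norm z \<le> B" using rho0_bdd unfolding bounded_iff by blast
  have "bdd_above (range (\<lambda>x. u0' x + rho0 x))"
  proof (rule bdd_aboveI2)
    fix x
    have "\<bar>u0' x\<bar> \<le> A" "\<bar>rho0 x\<bar> \<le> B" using A B by auto
    then show "u0' x + rho0 x \<le> A + B" by linarith
  qed
  then have "u0' y + rho0 y \<le> Sup (range (\<lambda>x. u0' x + rho0 x))" by (rule cSup_upper[rotated]) auto
  then show "u0' y + rho0 y \<le> MM" by (simp add: MM_def)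
qed

lemma f1_nonpos: "f1 v \<le> 0" using f_dec by (simp add: f1_def)

lemma M_bounds: assumes t: "t \<in> {0..<T}" shows "rho t x \<le> MM \<and> e t x \<le> MM"
proof -
  obtain Bu where Bu: "Bu \<ge> 0" "\<And>s y. 0 \<le> s \<Longrightarrow> s \<le> t \<Longrightarrow> \<bar>u s y\<bar> \<le> Bu" using bnd[OF bdd2 t] by blast
  obtain Bf where Bf: "Bf \<ge> 0" "\<And>v. \<bar>v\<bar> \<le> Bu \<Longrightarrow> \<bar>f v\<bar> \<le> Bf" using fun_bnd[OF fc] by blast
  define V where "V = Bu + Bf"
  have V: "V \<ge> 0" using Bu Bf by (simp add: V_def)
  have t0: "0 \<le> t" "t < T" using t by auto
  have main: "rho t x - (MM + \<epsilon> * (1 + t)) < 0 \<and> e t x - (MM + \<epsilon> * (1 + t)) < 0" if eps: "\<epsilon> > 0" for \<epsilon>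
  proof -
    have C1: "C1_strip T (\<lambda>s y. rho s y - (MM + \<epsilon> * (1 + s))) (\<lambda>s y. rhot s y - \<epsilon>) (\<lambda>s y. rhox s y - 0)"
      by (rule C1_diff[OF rho_C1 C1_time]) (auto intro!: derivative_eq_intros continuous_intros)
    have C2: "C1_strip T (\<lambda>s y. e s y - (MM + \<epsilon> * (1 + s))) (\<lambda>s y. et s y - \<epsilon>) (\<lambda>s y. ex s y - 0)"
      by (rule C1_diff[OF e_C1 C1_time]) (auto intro!: derivative_eq_intros continuous_intros)
    show ?thesis
    proof (rule touch2[OF C1 C2 t0 V])
      fix y show "rho 0 y - (MM + \<epsilon> * (1 + 0)) < 0 \<and> e 0 y - (MM + \<epsilon> * (1 + 0)) < 0"
        using eps init_M(1)[of y] init_M(2)[of y] init1[of y] ux0[OF t, of y] by (simp add: e_def)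
    next
      fix s y assume s: "0 < s" "s \<le> t" and z: "rho s y - (MM + \<epsilon> * (1 + s)) = 0"
        and o: "e s y - (MM + \<epsilon> * (1 + s)) \<le> 0"
      have sT: "s \<in> {0..<T}" using s t0 by auto
      show "\<exists>a. \<bar>a\<bar> \<le> V \<and> rhot s y - \<epsilon> + a * (rhox s y - 0) < 0"
      proof (intro exI[of _ "f (u s y)"] conjI)
        show "\<bar>f (u s y)\<bar> \<le> V" using Bf(2)[of "u s y"] Bu(2)[of s y] s Bu(1) by (simp add: V_def)
        have "ux s y \<le> 0" using z o by (simp add: e_def)
        moreover have "rho s y * f1 (u s y) \<le> 0"
          using rho_nonneg[OF sT, of y] f1_nonpos by (simp add: mult_nonneg_nonpos)
        ultimately have "rho s y * f1 (u s y) * ux s y \<ge> 0" by (simp add: mult_nonpos_nonpos)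
        moreover have "rhot s y - \<epsilon> + f (u s y) * (rhox s y - 0) = - (rho s y * f1 (u s y) * ux s y) - \<epsilon>"
          using rhot_eq[OF sT, of y] by (simp add: algebra_simps)
        ultimately show "rhot s y - \<epsilon> + f (u s y) * (rhox s y - 0) < 0"
          using eps by linarith
      qed
    next
      fix s y assume s: "0 < s" "s \<le> t" and z: "e s y - (MM + \<epsilon> * (1 + s)) = 0"
        and o: "rho s y - (MM + \<epsilon> * (1 + s)) \<le> 0"
      have sT: "s \<in> {0..<T}" using s t0 by auto
      show "\<exists>a. \<bar>a\<bar> \<le> V \<and> et s y - \<epsilon> + a * (ex s y - 0) < 0"
      proof (intro exI[of _ "u s y"] conjI)
        show "\<bar>u s y\<bar> \<le> V" using Bf(1) Bu(2)[of s y] s by (simp add: V_def)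
        have "ux s y \<ge> 0" using z o by (simp add: e_def)
        then have "ux s y * e s y \<ge> 0" using e_nonneg[OF sT, of y] by simp
        moreover have "et s y - \<epsilon> + u s y * (ex s y - 0) = - (ux s y * e s y) - \<epsilon>"
          using et_eq[OF sT, of y] by (simp add: algebra_simps)
        ultimately show "et s y - \<epsilon> + u s y * (ex s y - 0) < 0"
          using eps by linarith
      qed
    qed
  qed
  have c: "1 + t > 0" using t0 by simp
  have "rho t x - MM \<le> 0" by (rule le_eps[OF c]) (use main in force)
  moreover have "e t x - MM \<le> 0" by (rule le_eps[OF c]) (use main in force)
  ultimately show ?thesis by simp
qed

definition "Fc = Sup ((\<lambda>v. \<bar>f v\<bar> + \<bar>f1 v\<bar> + \<bar>f2 v\<bar>) ` {umin..umax})"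

lemma Fc_bnd: assumes "umin \<le> v" "v \<le> umax" shows "\<bar>f1 v\<bar> \<le> Fc" "\<bar>f2 v\<bar> \<le> Fc" "0 \<le> Fc"
proof -
  have "compact ((\<lambda>v. \<bar>f v\<bar> + \<bar>f1 v\<bar> + \<bar>f2 v\<bar>) ` {umin..umax})"
    by (rule compact_continuous_image) (auto intro!: continuous_intros)
  then have "bdd_above ((\<lambda>v. \<bar>f v\<bar> + \<bar>f1 v\<bar> + \<bar>f2 v\<bar>) ` {umin..umax})"
    by (simp add: bounded_imp_bdd_above compact_imp_bounded)
  then have "\<bar>f v\<bar> + \<bar>f1 v\<bar> + \<bar>f2 v\<bar> \<le> Fc" unfolding Fc_def by (rule cSup_upper[rotated]) (use assms in auto)
  then show "\<bar>f1 v\<bar> \<le> Fc" "\<bar>f2 v\<bar> \<le> Fc" "0 \<le> Fc" by auto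
qed

definition "QQ = 1 + supnorm rho0' + supnorm (\<lambda>x. u0'' x + rho0' x)"
definition "EE = 12 * (Fc + 1) * max (MM^3) 1"

lemma QQ: "\<bar>rho0' y\<bar> < QQ" "\<bar>u0'' y + rho0' y\<bar> < QQ" "QQ \<ge> 1"
proof -
  have b2: "bounded (range (\<lambda>x. u0'' x + rho0' x))" by (rule bounded_range_add[OF u0''_bdd rho0'_bdd])
  have a: "\<bar>rho0' z\<bar> \<le> supnorm rho0'" for z by (rule supnorm_ge[OF rho0'_bdd])
  have b: "\<bar>u0'' z + rho0' z\<bar> \<le> supnorm (\<lambda>x. u0'' x + rho0' x)" for z using supnorm_ge[OF b2] by simp
  have "0 \<le> supnorm rho0'" "0 \<le> supnorm (\<lambda>x. u0'' x + rho0' x)" using a[of 0] b[of 0] by linarith+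
  then show "\<bar>rho0' y\<bar> < QQ" "\<bar>u0'' y + rho0' y\<bar> < QQ" "QQ \<ge> 1" using a[of y] b[of y] by (auto simp: QQ_def)
qed

lemma umin_umax: "umin \<le> umax" by (simp add: umin_def umax_def)

lemma rhox_bound: assumes t: "t \<in> {0..<T}" shows "\<bar>rhox t x\<bar> < QQ * exp (EE * t)"
proof -
  obtain Bu where Bu: "Bu \<ge> 0" "\<And>s y. 0 \<le> s \<Longrightarrow> s \<le> t \<Longrightarrow> \<bar>u s y\<bar> \<le> Bu" using bnd[OF bdd2 t] by blast
  obtain Bf where Bf: "Bf \<ge> 0" "\<And>v. \<bar>v\<bar> \<le> Bu \<Longrightarrow> \<bar>f v\<bar> \<le> Bf" using fun_bnd[OF fc] by blast
  define V where "V = Bu + Bf"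
  have V: "V \<ge> 0" using Bu Bf by (simp add: V_def)
  have t0: "0 \<le> t" "t < T" using t by auto
  have Fc0: "Fc \<ge> 0" using Fc_bnd(3)[OF umin_umax order_refl] .
  have M0: "MM \<ge> 0" using init_M(3) .
  have E0: "EE \<ge> 0" unfolding EE_def using Fc0 by simp
  define \<Phi> where "\<Phi> = (\<lambda>s. QQ * exp (EE * s))"
  have Phi1: "\<Phi> s \<ge> 1" if "s \<ge> 0" for s
  proof -
    have "1 \<le> exp (EE * s)" using E0 that by simp
    then have "1 * 1 \<le> QQ * exp (EE * s)" using QQ(3) by (intro mult_mono) auto
    then show ?thesis by (simp add: \<Phi>_def)
  qed
  have Cpsi: "C1_strip T (\<lambda>s y. \<Phi> s * \<Phi> s) (\<lambda>s y. 2 * EE * (\<Phi> s * \<Phi> s)) (\<lambda>s y. 0)"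
    unfolding \<Phi>_def by (rule C1_time) (auto intro!: derivative_eq_intros continuous_intros simp: algebra_simps)
  have C1: "C1_strip T (\<lambda>s y. rhox s y * rhox s y - \<Phi> s * \<Phi> s)
      (\<lambda>s y. (rhoxt s y * rhox s y + rhox s y * rhoxt s y) - 2 * EE * (\<Phi> s * \<Phi> s))
      (\<lambda>s y. (rhoxx s y * rhox s y + rhox s y * rhoxx s y) - 0)"
    by (rule C1_diff[OF C1_mult[OF rhox_C1 rhox_C1] Cpsi])
  have C2: "C1_strip T (\<lambda>s y. ex s y * ex s y - \<Phi> s * \<Phi> s)
      (\<lambda>s y. (ext s y * ex s y + ex s y * ext s y) - 2 * EE * (\<Phi> s * \<Phi> s))
      (\<lambda>s y. (exx s y * ex s y + ex s y * exx s y) - 0)"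
    by (rule C1_diff[OF C1_mult[OF ex_C1' ex_C1'] Cpsi])
  have pt: "0 \<le> rho s y \<and> rho s y \<le> MM \<and> \<bar>ux s y\<bar> \<le> MM \<and> \<bar>f1 (u s y)\<bar> \<le> Fc \<and> \<bar>f2 (u s y)\<bar> \<le> Fc \<and> 0 \<le> e s y \<and> e s y \<le> MM"
    if sT: "s \<in> {0..<T}" for s y
  proof -
    have r: "0 \<le> rho s y" "rho s y \<le> MM" "0 \<le> e s y" "e s y \<le> MM"
      using rho_nonneg[OF sT] M_bounds[OF sT] e_nonneg[OF sT] by auto
    have "ux s y = e s y - rho s y" by (simp add: e_def)
    then have "\<bar>ux s y\<bar> \<le> MM" using r by linarith
    moreover have "umin \<le> u s y" "u s y \<le> umax" using u_range[OF sT] by auto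
    ultimately show ?thesis using r Fc_bnd by auto
  qed
  have W: "rhox t x * rhox t x - \<Phi> t * \<Phi> t < 0 \<and> ex t x * ex t x - \<Phi> t * \<Phi> t < 0"
  proof (rule touch2[OF C1 C2 t0 V])
    fix y
    have "\<bar>rhox 0 y\<bar> < \<Phi> 0" "\<bar>ex 0 y\<bar> < \<Phi> 0"
      using QQ(1,2)[of y] rhox0[OF t] uxx0[OF t] by (auto simp: \<Phi>_def ex_def)
    then show "rhox 0 y * rhox 0 y - \<Phi> 0 * \<Phi> 0 < 0 \<and> ex 0 y * ex 0 y - \<Phi> 0 * \<Phi> 0 < 0"
      using sq_lt by fastforce
  next
    fix s y assume s: "0 < s" "s \<le> t" and z: "rhox s y * rhox s y - \<Phi> s * \<Phi> s = 0"
      and o: "ex s y * ex s y - \<Phi> s * \<Phi> s \<le> 0"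
    have sT: "s \<in> {0..<T}" using s t0 by auto
    have P: "\<Phi> s \<ge> 1" using Phi1 s by simp
    have p: "\<bar>rhox s y\<bar> = \<Phi> s" using z P by (intro sq_abs_eq) auto
    have q: "\<bar>ex s y\<bar> \<le> \<Phi> s" using o P by (intro sq_abs_le) auto
    define R where "R = rhoxt s y + f (u s y) * rhoxx s y"
    have Req: "R = -(2*(rhox s y * f1 (u s y) * ux s y)) - rho s y * f2 (u s y) * ux s y * ux s y
        - rho s y * f1 (u s y) * (ex s y - rhox s y)"
      using rhoxt_eq[OF sT, of y] unfolding R_def ex_def by (simp add: algebra_simps)
    have pts: "0 \<le> rho s y" "rho s y \<le> MM" "\<bar>ux s y\<bar> \<le> MM" "\<bar>f1 (u s y)\<bar> \<le> Fc" "\<bar>f2 (u s y)\<bar> \<le> Fc"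
      using pt[OF sT, of y] by auto
    have rM: "\<bar>rho s y\<bar> \<le> MM" using pts by simp
    have b1: "\<bar>rhox s y * f1 (u s y) * ux s y\<bar> \<le> \<Phi> s * Fc * MM"
      by (intro mm pts) (use p in simp)
    have b2: "\<bar>rho s y * f2 (u s y) * ux s y * ux s y\<bar> \<le> MM * Fc * MM * MM"
      by (intro mm pts rM)
    have "\<bar>ex s y - rhox s y\<bar> \<le> 2 * \<Phi> s" using p q by linarith
    then have b3: "\<bar>rho s y * f1 (u s y) * (ex s y - rhox s y)\<bar> \<le> MM * Fc * (2 * \<Phi> s)"
      by (intro mm pts rM)
    have "\<bar>R\<bar> \<le> 2*(\<Phi> s * Fc * MM) + MM * Fc * MM * MM + MM * Fc * (2 * \<Phi> s)"
      unfolding Req using b1 b2 b3 by linarith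
    also have "\<dots> = 4*(Fc*MM)*\<Phi> s + Fc*MM^3" by (simp add: power3_eq_cube algebra_simps)
    finally have Rb: "\<bar>R\<bar> \<le> 4*(Fc*MM)*\<Phi> s + Fc*MM^3" .
    have "2 * rhox s y * R - 2 * EE * (\<Phi> s * \<Phi> s) < 0"
      by (rule key_common[OF Fc0 M0 P EE_def p]) (use Rb in simp)
    then show "\<exists>a. \<bar>a\<bar> \<le> V \<and> (rhoxt s y * rhox s y + rhox s y * rhoxt s y) - 2 * EE * (\<Phi> s * \<Phi> s)
        + a * ((rhoxx s y * rhox s y + rhox s y * rhoxx s y) - 0) < 0"
      using Bf(2)[of "u s y"] Bu(2)[of s y] s Bu(1)
      by (intro exI[of _ "f (u s y)"]) (auto simp: V_def R_def algebra_simps)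
  next
    fix s y assume s: "0 < s" "s \<le> t" and z: "ex s y * ex s y - \<Phi> s * \<Phi> s = 0"
      and o: "rhox s y * rhox s y - \<Phi> s * \<Phi> s \<le> 0"
    have sT: "s \<in> {0..<T}" using s t0 by auto
    have P: "\<Phi> s \<ge> 1" using Phi1 s by simp
    have p: "\<bar>ex s y\<bar> = \<Phi> s" using z P by (intro sq_abs_eq) auto
    have q: "\<bar>rhox s y\<bar> \<le> \<Phi> s" using o P by (intro sq_abs_le) auto
    define R where "R = ext s y + u s y * exx s y"
    have Req: "R = -(ex s y * e s y) + rhox s y * e s y - 2 * (ux s y * ex s y)"
      using ext_eq[OF sT, of y] unfolding R_def ex_def by (simp add: algebra_simps)
    have pts: "0 \<le> e s y" "e s y \<le> MM" "\<bar>ux s y\<bar> \<le> MM"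
      using pt[OF sT, of y] by auto
    have eM: "\<bar>e s y\<bar> \<le> MM" using pts by simp
    have b1: "\<bar>ex s y * e s y\<bar> \<le> \<Phi> s * MM" by (intro mm eM) (use p in simp)
    have b2: "\<bar>rhox s y * e s y\<bar> \<le> \<Phi> s * MM" by (intro mm eM q)
    have b3: "\<bar>ux s y * ex s y\<bar> \<le> MM * \<Phi> s" by (intro mm pts) (use p in simp)
    have "\<bar>R\<bar> \<le> 4*MM*\<Phi> s" unfolding Req using b1 b2 b3 by (simp add: algebra_simps; linarith)
    have "2 * ex s y * R - 2 * EE * (\<Phi> s * \<Phi> s) < 0"
      by (rule key_common[OF Fc0 M0 P EE_def p]) (use \<open>\<bar>R\<bar> \<le> 4*MM*\<Phi> s\<close> in simp)
    then show "\<exists>a. \<bar>a\<bar> \<le> V \<and> (ext s y * ex s y + ex s y * ext s y) - 2 * EE * (\<Phi> s * \<Phi> s)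
        + a * ((exx s y * ex s y + ex s y * exx s y) - 0) < 0"
      using Bf(1) Bu(2)[of s y] s
      by (intro exI[of _ "u s y"]) (auto simp: V_def R_def algebra_simps)
  qed
  have "\<Phi> t \<ge> 0" using Phi1[of t] t0 by simp
  then show ?thesis using W sq_lt_abs unfolding \<Phi>_def by auto
qed

lemma final: "t \<in> {0..<T} \<Longrightarrow> supnorm (rhox t) \<le> QQ * exp (EE * t)"
  unfolding supnorm_def
  by (rule cSup_least) (use rhox_bound less_imp_le in fastforce)+

end

theorem mainTheorem10:
  fixes f :: "real \<Rightarrow> real" and ustar :: real
    and rho0 rho0' u0 u0' u0'' :: "real \<Rightarrow> real"
    and T :: real
    and rho rhot rhox u ut ux uxx rhoxt rhoxx ext exx :: "real \<Rightarrow> real \<Rightarrow> real"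
  assumes f_smooth: "smooth_real f"
    and f_dec: "\<And>v. deriv f v \<le> 0"
    and ustar: "f ustar = ustar"
    and rho0_der: "\<And>x. (rho0 has_real_derivative rho0' x) (at x)"
    and rho0'_cont: "continuous_on UNIV rho0'"
    and rho0_bdd: "bounded (range rho0)" and rho0'_bdd: "bounded (range rho0')"
    and u0_der: "\<And>x. (u0 has_real_derivative u0' x) (at x)"
    and u0'_der: "\<And>x. (u0' has_real_derivative u0'' x) (at x)"
    and u0''_cont: "continuous_on UNIV u0''"
    and u0_bdd: "bounded (range u0)" and u0'_bdd: "bounded (range u0')"
    and u0''_bdd: "bounded (range u0'')"
    and rho0_nonneg: "\<And>x. rho0 x \<ge> 0"
    and e0_nonneg: "\<And>x. u0' x + rho0 x \<ge> 0"
    and rho_C1: "C1_strip T rho rhot rhox"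
    and u_C1: "C1_strip T u ut ux"
    and bdd: "bdd_strip T rho" "bdd_strip T u" "bdd_strip T rhox" "bdd_strip T ux"
    and eq_rho: "\<And>t x. t \<in> {0..<T} \<Longrightarrow>
        ((\<lambda>y. rho t y * f (u t y)) has_real_derivative (- rhot t x)) (at x)"
    and eq_u: "\<And>t x. t \<in> {0..<T} \<Longrightarrow>
        ut t x + u t x * ux t x = rho t x * (f (u t x) - u t x)"
    and init: "\<And>x. rho 0 x = rho0 x" "\<And>x. u 0 x = u0 x"
    and ux_der: "\<And>t x. t \<in> {0..<T} \<Longrightarrow> ((\<lambda>y. ux t y) has_real_derivative uxx t x) (at x)"
    and rhox_C1: "C1_strip T rhox rhoxt rhoxx"
    and ex_C1: "C1_strip T (\<lambda>t x. uxx t x + rhox t x) ext exx"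
  shows "\<forall>t\<in>{0..<T}.
    supnorm (rhox t) \<le>
      (1 + supnorm rho0' + supnorm (\<lambda>x. u0'' x + rho0' x)) *
      exp (12 * (Sup ((\<lambda>v. \<bar>f v\<bar> + \<bar>deriv f v\<bar> + \<bar>deriv (deriv f) v\<bar>) `
                     {min (Inf (range u0)) ustar .. max (Sup (range u0)) ustar}) + 1)
              * max ((max (Sup (range rho0)) (Sup (range (\<lambda>x. u0' x + rho0 x)))) ^ 3) 1 * t)"
proof -
  interpret P: pde f ustar rho0 rho0' u0 u0' u0'' T rho rhot rhox u ut ux uxx rhoxt rhoxx ext exx
    by (rule pde.intro) (use assms in auto)
  show ?thesis
  proof
    fix t assume t: "t \<in> {0..<T}"
    have "supnorm (rhox t) \<le> P.QQ * exp (P.EE * t)" by (rule P.final[OF t])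
    then show "supnorm (rhox t) \<le>
      (1 + supnorm rho0' + supnorm (\<lambda>x. u0'' x + rho0' x)) *
      exp (12 * (Sup ((\<lambda>v. \<bar>f v\<bar> + \<bar>deriv f v\<bar> + \<bar>deriv (deriv f) v\<bar>) `
                     {min (Inf (range u0)) ustar .. max (Sup (range u0)) ustar}) + 1)
              * max ((max (Sup (range rho0)) (Sup (range (\<lambda>x. u0' x + rho0 x)))) ^ 3) 1 * t)"
      by (simp add: P.QQ_def P.EE_def P.Fc_def P.f1_def P.f2_def P.umin_def P.umax_def P.MM_def)
  qed
qed

end
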